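(* Let $R\subset S$ be an integral ring extension that has FIP. Then $R\subset S$ is seminormal if and only if the conductor $(R:S)$ is a semiprime (i.e. radical) ideal of $S$.
   Context: Rings are commutative with identity. $(R:S)=\{r\in R\mid rS\subseteq R\}$. The extension has FIP if the set $[R,S]$ of $R$-subalgebras of $S$ is finite. $R\subseteq S$ is seminormal if for $b\in S$, $b^2,b^3\in R$ implies $b\in R$. *)

theory Defs
  imports Main
begin

text \<open>The overring S is the whole carrier of a type 'a :: comm_ring_1;
  the base ring R is a subring (containing 1) given as a set.\<close>

definition is_subring :: "'a::comm_ring_1 set \<Rightarrow> bool" where
  "is_subring T \<longleftrightarrow> 0 \<in> T \<and> 1 \<in> T \<and>
     (\<forall>x\<in>T. \<forall>y\<in>T. x + y \<in> T \<and> x - y \<in> T \<and> x * y \<in> T)"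

definition integral_ext :: "'a::comm_ring_1 set \<Rightarrow> bool" where
  "integral_ext R \<longleftrightarrow> (\<forall>s::'a. \<exists>n::nat. \<exists>c::nat \<Rightarrow> 'a.
      (\<forall>i<n. c i \<in> R) \<and> s ^ n + (\<Sum>i<n. c i * s ^ i) = 0)"

definition has_FIP :: "'a::comm_ring_1 set \<Rightarrow> bool" where
  "has_FIP R \<longleftrightarrow> finite {T :: 'a set. is_subring T \<and> R \<subseteq> T}"

definition seminormal_ext :: "'a::comm_ring_1 set \<Rightarrow> bool" where
  "seminormal_ext R \<longleftrightarrow> (\<forall>b::'a. b ^ 2 \<in> R \<and> b ^ 3 \<in> R \<longrightarrow> b \<in> R)"

definition conductor :: "'a::comm_ring_1 set \<Rightarrow> 'a set" where
  "conductor R = {r \<in> R. \<forall>s::'a. r * s \<in> R}"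

definition is_ideal :: "'a::comm_ring_1 set \<Rightarrow> bool" where
  "is_ideal I \<longleftrightarrow> 0 \<in> I \<and> (\<forall>x\<in>I. \<forall>y\<in>I. x + y \<in> I) \<and> (\<forall>x\<in>I. \<forall>s. s * x \<in> I)"

definition semiprime_ideal :: "'a::comm_ring_1 set \<Rightarrow> bool" where
  "semiprime_ideal I \<longleftrightarrow> is_ideal I \<and> (\<forall>x::'a. \<forall>n::nat. n \<ge> 1 \<and> x ^ n \<in> I \<longrightarrow> x \<in> I)"

end

theory Submission
  imports Defs
begin

lemma sr_0: "is_subring R \<Longrightarrow> 0 \<in> R" by (simp add: is_subring_def)
lemma sr_1: "is_subring R \<Longrightarrow> 1 \<in> R" by (simp add: is_subring_def)
lemma sr_add: "is_subring R \<Longrightarrow> x \<in> R \<Longrightarrow> y \<in> R \<Longrightarrow> x + y \<in> R" by (simp add: is_subring_def)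
lemma sr_diff: "is_subring R \<Longrightarrow> x \<in> R \<Longrightarrow> y \<in> R \<Longrightarrow> x - y \<in> R" by (simp add: is_subring_def)
lemma sr_mult: "is_subring R \<Longrightarrow> x \<in> R \<Longrightarrow> y \<in> R \<Longrightarrow> x * y \<in> R" by (simp add: is_subring_def)
lemma sr_uminus: "is_subring R \<Longrightarrow> x \<in> R \<Longrightarrow> - x \<in> R"
  using sr_diff[of R 0 x] sr_0[of R] by simp
lemma sr_pow: "is_subring R \<Longrightarrow> x \<in> R \<Longrightarrow> x ^ n \<in> R"
  by (induction n) (auto intro: sr_1 sr_mult)
lemma sr_sum: "is_subring R \<Longrightarrow> (\<And>i. i \<in> I \<Longrightarrow> f i \<in> R) \<Longrightarrow> sum f I \<in> R"
  by (induction I rule: infinite_finite_induct) (auto intro: sr_0 sr_add)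

lemma cond_sub: "conductor R \<subseteq> R" by (auto simp: conductor_def)

lemma cond_ideal:
  assumes R: "is_subring R" shows "is_ideal (conductor R)"
  unfolding is_ideal_def
proof (intro conjI ballI allI)
  show "0 \<in> conductor R" using sr_0[OF R] by (simp add: conductor_def)
next
  fix x y assume "x \<in> conductor R" "y \<in> conductor R"
  then show "x + y \<in> conductor R" using R
    by (auto simp: conductor_def distrib_right intro: sr_add)
next
  fix x s assume x: "x \<in> conductor R"
  have "s * x \<in> R" using x by (auto simp: conductor_def mult.commute)
  moreover have "\<forall>t. s * x * t \<in> R"
  proof
    fix t have e: "s * x * t = x * (s * t)" by (simp add: ac_simps)
    have "x * (s * t) \<in> R" using x by (simp add: conductor_def)
    then show "s * x * t \<in> R" using e by metis
  qed
  ultimately show "s * x \<in> conductor R" by (simp add: conductor_def)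
qed

lemma ideal_mult: "is_ideal I \<Longrightarrow> x \<in> I \<Longrightarrow> s * x \<in> I" by (simp add: is_ideal_def)

lemma sn_sq:
  assumes R: "is_subring R" and sn: "seminormal_ext R" and x2: "x^2 \<in> conductor R"
  shows "x \<in> conductor R"
proof -
  have x2t: "x^2 * u \<in> R" for u using x2 unfolding conductor_def by blast
  have xt: "x * t \<in> R" for t
  proof -
    have e1: "(x*t)^2 = x^2 * t^2" by (rule power_mult_distrib)
    have 1: "(x*t)^2 \<in> R" unfolding e1 by (rule x2t)
    have e2: "(x*t)^3 = x^2 * (x * t^3)"
      unfolding power_mult_distrib power2_eq_square power3_eq_cube by (simp only: ac_simps)
    have 2: "(x*t)^3 \<in> R" unfolding e2 by (rule x2t)
    show ?thesis using sn 1 2 unfolding seminormal_ext_def by blast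
  qed
  have "x \<in> R" using xt[of 1] by simp
  then show ?thesis using xt unfolding conductor_def by blast
qed

lemma fwd:
  assumes R: "is_subring R" and sn: "seminormal_ext R"
  shows "semiprime_ideal (conductor R)"
proof -
  have id: "is_ideal (conductor R)" using cond_ideal[OF R] .
  have "x \<in> conductor R" if "n \<ge> 1" "x^n \<in> conductor R" for n x
    using that
  proof (induction n rule: less_induct)
    case (less n)
    show ?case
    proof (cases "n = 1")
      case True then show ?thesis using less by simp
    next
      case False
      then have n2: "n \<ge> 2" using less by simp
      have ee: "(n-1)*2 = (n-2) + n" using n2 by simp
      have "(x^(n-1))^2 = x^(n-2) * x^n"
        by (simp only: power_mult[symmetric] power_add[symmetric] ee)
      also have "\<dots> \<in> conductor R" using ideal_mult[OF id less(3)] .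
      finally have "x^(n-1) \<in> conductor R" using sn_sq[OF R sn] by blast
      then show ?thesis using less(1)[of "n-1"] n2 by simp
    qed
  qed
  then show ?thesis using id by (auto simp: semiprime_ideal_def)
qed

definition spn :: "'a::comm_ring_1 set \<Rightarrow> 'a \<Rightarrow> nat \<Rightarrow> 'a set" where
  "spn R s d = {x. \<exists>r. (\<forall>i<d. r i \<in> R) \<and> x = (\<Sum>i<d. r i * s^i)}"

lemma spn_intro: "(\<forall>i<d. r i \<in> R) \<Longrightarrow> (\<Sum>i<d. r i * s^i) \<in> spn R s d"
  unfolding spn_def by auto

lemma spn_0: "is_subring R \<Longrightarrow> 0 \<in> spn R s d"
  unfolding spn_def by (rule CollectI, rule exI[of _ "\<lambda>_. 0"]) (simp add: sr_0)

lemma spn_add: assumes "is_subring R" "x \<in> spn R s d" "y \<in> spn R s d"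
  shows "x + y \<in> spn R s d"
proof -
  obtain r where r: "\<forall>i<d. r i \<in> R" "x = (\<Sum>i<d. r i * s^i)" using assms(2) unfolding spn_def by blast
  obtain q where q: "\<forall>i<d. q i \<in> R" "y = (\<Sum>i<d. q i * s^i)" using assms(3) unfolding spn_def by blast
  have e: "x + y = (\<Sum>i<d. (r i + q i) * s^i)" unfolding r(2) q(2) by (simp only: sum.distrib[symmetric] distrib_right)
  have "\<forall>i<d. r i + q i \<in> R" using r q assms(1) by (auto intro: sr_add)
  then show ?thesis unfolding e by (rule spn_intro)
qed

lemma spn_smult: assumes "is_subring R" "t \<in> R" "x \<in> spn R s d"
  shows "t * x \<in> spn R s d"
proof -
  obtain r where r: "\<forall>i<d. r i \<in> R" "x = (\<Sum>i<d. r i * s^i)" using assms(3) unfolding spn_def by blast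
  have e: "t * x = (\<Sum>i<d. (t * r i) * s^i)" unfolding r(2) by (simp add: sum_distrib_left mult.assoc)
  have "\<forall>i<d. t * r i \<in> R" using r assms by (auto intro: sr_mult)
  then show ?thesis unfolding e by (rule spn_intro)
qed

lemma spn_diff: assumes "is_subring R" "x \<in> spn R s d" "y \<in> spn R s d"
  shows "x - y \<in> spn R s d"
proof -
  have "(-1) * y \<in> spn R s d" using spn_smult[OF assms(1) _ assms(3)] sr_uminus[OF assms(1) sr_1[OF assms(1)]] by blast
  then have "x + (-1) * y \<in> spn R s d" using spn_add assms by blast
  then show ?thesis by simp
qed

lemma spn_sum: "is_subring R \<Longrightarrow> (\<And>i. i \<in> I \<Longrightarrow> f i \<in> spn R s d) \<Longrightarrow> sum f I \<in> spn R s d"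
  by (induction I rule: infinite_finite_induct) (auto intro: spn_0 spn_add)

lemma spn_pow_lt: assumes "is_subring R" "i < d" shows "s^i \<in> spn R s d"
proof -
  have "(\<Sum>j<d. (if j = i then 1 else 0) * s^j) = (\<Sum>j<d. if j = i then s^j else 0)"
    by (rule sum.cong) auto
  also have "\<dots> = s^i" using assms(2) by (subst sum.delta) auto
  finally have "(\<Sum>j<d. (if j = i then 1 else 0) * s^j) = s^i" .
  moreover have "\<forall>j<d. (if j = i then 1 else 0) \<in> R" using sr_0[OF assms(1)] sr_1[OF assms(1)] by auto
  ultimately show ?thesis using spn_intro[of d "\<lambda>j. if j = i then 1 else 0" R s] by simp
qed

lemma spn_pow:
  assumes R: "is_subring R" and cR: "\<forall>i<d. c i \<in> R" and eq: "s^d + (\<Sum>i<d. c i * s^i) = 0"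
  shows "s^n \<in> spn R s d"
proof (induction n rule: less_induct)
  case (less n)
  show ?case
  proof (cases "n < d")
    case True then show ?thesis using spn_pow_lt[OF R] by blast
  next
    case False
    have sd: "s^d = - (\<Sum>i<d. c i * s^i)" using eq by (simp add: eq_neg_iff_add_eq_0)
    have "s^n = s^(n-d) * s^d" using False by (simp add: power_add[symmetric])
    also have "\<dots> = - (\<Sum>i<d. s^(n-d) * (c i * s^i))"
      by (simp only: sd sum_distrib_left mult_minus_right)
    also have "\<dots> = (\<Sum>i<d. - (s^(n-d) * (c i * s^i)))"
      by (simp only: sum_negf)
    also have "\<dots> = (\<Sum>i<d. (- c i) * s^(n-d+i))"
      by (rule sum.cong) (simp_all add: power_add)
    finally have e: "s^n = (\<Sum>i<d. (- c i) * s^(n-d+i))" .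
    have "(\<Sum>i<d. (- c i) * s^(n-d+i)) \<in> spn R s d"
    proof (rule spn_sum[OF R])
      fix i assume "i \<in> {..<d}"
      then have "n-d+i < n" "- c i \<in> R" using False cR sr_uminus[OF R] by auto
      then show "(- c i) * s^(n-d+i) \<in> spn R s d" using less spn_smult[OF R] by blast
    qed
    then show ?thesis using e by simp
  qed
qed

lemma spn_mult:
  assumes R: "is_subring R" and cR: "\<forall>i<d. c i \<in> R" and eq: "s^d + (\<Sum>i<d. c i * s^i) = 0"
    and x: "x \<in> spn R s d" and y: "y \<in> spn R s d"
  shows "x * y \<in> spn R s d"
proof -
  obtain r where r: "\<forall>i<d. r i \<in> R" "x = (\<Sum>i<d. r i * s^i)" using x unfolding spn_def by blast
  obtain q where q: "\<forall>i<d. q i \<in> R" "y = (\<Sum>i<d. q i * s^i)" using y unfolding spn_def by blast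
  have "x * y = (\<Sum>i<d. x * (q i * s^i))" using q by (simp add: sum_distrib_left)
  also have "\<dots> = (\<Sum>i<d. q i * (\<Sum>j<d. r j * s^(j+i)))"
  proof (rule sum.cong)
    fix i
    have "x * (q i * s^i) = q i * (x * s^i)" by (simp add: ac_simps)
    also have "x * s^i = (\<Sum>j<d. r j * s^(j+i))"
      unfolding r(2) sum_distrib_right by (rule sum.cong) (simp_all add: power_add mult.assoc)
    finally show "x * (q i * s^i) = q i * (\<Sum>j<d. r j * s^(j+i))" .
  qed simp
  also have "\<dots> \<in> spn R s d"
  proof (rule spn_sum[OF R])
    fix i assume i: "i \<in> {..<d}"
    have "(\<Sum>j<d. r j * s^(j+i)) \<in> spn R s d"
    proof (rule spn_sum[OF R])
      fix j assume "j \<in> {..<d}"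
      then have "r j \<in> R" using r by auto
      then show "r j * s^(j+i) \<in> spn R s d" using spn_smult[OF R _ spn_pow[OF R cR eq]] by blast
    qed
    moreover have "q i \<in> R" using q i by auto
    ultimately show "q i * (\<Sum>j<d. r j * s^(j+i)) \<in> spn R s d" using spn_smult[OF R] by blast
  qed
  finally show ?thesis .
qed

lemma spn_R: assumes R: "is_subring R" and cR: "\<forall>i<d. c i \<in> R" and eq: "s^d + (\<Sum>i<d. c i * s^i) = 0"
  and t: "t \<in> R" shows "t \<in> spn R s d"
  using spn_smult[OF R t spn_pow[OF R cR eq, of 0]] by simp

lemma spn_subring: assumes R: "is_subring R" and cR: "\<forall>i<d. c i \<in> R" and eq: "s^d + (\<Sum>i<d. c i * s^i) = 0"
  shows "is_subring (spn R s d)"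
  unfolding is_subring_def
proof (intro conjI ballI)
  show "0 \<in> spn R s d" by (rule spn_0[OF R])
  show "1 \<in> spn R s d" by (rule spn_R[OF R cR eq sr_1[OF R]])
  fix x y assume "x \<in> spn R s d" "y \<in> spn R s d"
  then show "x + y \<in> spn R s d" "x - y \<in> spn R s d" "x * y \<in> spn R s d"
    by (rule spn_add[OF R], rule spn_diff[OF R], rule spn_mult[OF R cR eq])
qed

definition tk :: "'a::comm_ring_1 set \<Rightarrow> 'a set \<Rightarrow> 'a \<Rightarrow> nat \<Rightarrow> 'a set" where
  "tk R P a k = {x. \<exists>r\<in>R. \<exists>p\<in>P. x = r + a^k * p}"

lemma tk_intro: "r \<in> R \<Longrightarrow> p \<in> P \<Longrightarrow> r + a^k * p \<in> tk R P a k"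
  unfolding tk_def by blast

lemma tk_sub:
  assumes R: "is_subring R" and P: "is_subring P" and RP: "R \<subseteq> P" and a: "a \<in> R"
  shows "is_subring (tk R P a k) \<and> R \<subseteq> tk R P a k"
proof -
  have ak: "a^k \<in> P" using sr_pow[OF R a] RP by auto
  have sub: "R \<subseteq> tk R P a k"
  proof
    fix x assume "x \<in> R" then show "x \<in> tk R P a k" unfolding tk_def using sr_0[OF P] by force
  qed
  have "is_subring (tk R P a k)" unfolding is_subring_def
  proof (intro conjI ballI)
    show "0 \<in> tk R P a k" "1 \<in> tk R P a k" using sub sr_0[OF R] sr_1[OF R] by auto
  next
    fix x y assume x: "x \<in> tk R P a k" and y: "y \<in> tk R P a k"
    obtain r p where rp: "r \<in> R" "p \<in> P" "x = r + a^k * p" using x by (auto simp: tk_def)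
    obtain r' p' where rp': "r' \<in> R" "p' \<in> P" "y = r' + a^k * p'" using y by (auto simp: tk_def)
    have e1: "x + y = (r + r') + a^k * (p + p')" using rp rp' by (simp add: algebra_simps)
    show "x + y \<in> tk R P a k" unfolding e1 using rp rp' R P by (intro tk_intro sr_add)
    have e2: "x - y = (r - r') + a^k * (p - p')" using rp rp' by (simp add: algebra_simps)
    show "x - y \<in> tk R P a k" unfolding e2 using rp rp' R P by (intro tk_intro sr_diff)
    have e3: "x * y = (r * r') + a^k * (r * p' + r' * p + a^k * p * p')" using rp rp' by (simp add: algebra_simps)
    have "r * p' + r' * p + a^k * p * p' \<in> P"
      using rp rp' RP ak P by (auto intro!: sr_add sr_mult)
    then show "x * y \<in> tk R P a k" unfolding e3 using rp rp' R by (intro tk_intro sr_mult)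
  qed
  then show ?thesis using sub by simp
qed

lemma pigeon:
  fixes f :: "nat \<Rightarrow> 'b"
  assumes "finite (range f)" shows "\<exists>i j. i < j \<and> f i = f j"
proof -
  have "\<not> inj f" using assms finite_imageD by blast
  then obtain i j where "i \<noteq> j" "f i = f j" unfolding inj_def by blast
  then show ?thesis by (metis linorder_neq_iff)
qed

definition rmod :: "'a::comm_ring_1 set \<Rightarrow> 'a set \<Rightarrow> bool" where
  "rmod R W \<longleftrightarrow> 0 \<in> W \<and> (\<forall>x\<in>W. \<forall>y\<in>W. x + y \<in> W) \<and> (\<forall>r\<in>R. \<forall>x\<in>W. r * x \<in> W)"

lemma rmod_sum: "rmod R W \<Longrightarrow> (\<And>i. i \<in> I \<Longrightarrow> f i \<in> W) \<Longrightarrow> sum f I \<in> W"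
  by (induction I rule: infinite_finite_induct) (auto simp: rmod_def)

lemma nak:
  fixes n :: nat and g :: "nat \<Rightarrow> 'a::comm_ring_1"
  assumes R: "is_subring R" and a: "a \<in> R" and W: "rmod R W"
    and h: "\<forall>i<n. \<exists>w\<in>W. \<exists>r. (\<forall>j<n. r j \<in> R) \<and> g i = w + a * (\<Sum>j<n. r j * g j)"
  shows "\<exists>c\<in>R. \<forall>i<n. (1 - a*c) * g i \<in> W"
  using W h
proof (induction n arbitrary: W)
  case 0
  then show ?case using sr_0[OF R] by auto
next
  case (Suc n)
  define W' where "W' = {x. \<exists>w\<in>W. \<exists>t\<in>R. x = w + t * g n}"
  have W'I: "w + t * g n \<in> W'" if "w \<in> W" "t \<in> R" for w t unfolding W'_def using that by blast
  have WW': "W \<subseteq> W'" unfolding W'_def using sr_0[OF R] by force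
  have mW': "rmod R W'" unfolding rmod_def
  proof (intro conjI ballI)
    show "0 \<in> W'" using WW' Suc.prems(1) by (auto simp: rmod_def)
  next
    fix x y assume "x \<in> W'" "y \<in> W'"
    then obtain w t w' t' where "w \<in> W" "t \<in> R" "x = w + t * g n" "w' \<in> W" "t' \<in> R" "y = w' + t' * g n"
      unfolding W'_def by blast
    moreover have "x + y = (w + w') + (t + t') * g n" using calculation by (simp add: algebra_simps)
    ultimately show "x + y \<in> W'" using Suc.prems(1) R
      by (metis W'I rmod_def sr_add)
  next
    fix r x assume "r \<in> R" "x \<in> W'"
    then obtain w t where "w \<in> W" "t \<in> R" "x = w + t * g n" unfolding W'_def by blast
    moreover have "r * x = r * w + (r * t) * g n" using calculation by (simp add: algebra_simps)
    ultimately show "r * x \<in> W'" using Suc.prems(1) R \<open>r \<in> R\<close>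
      by (metis W'I rmod_def sr_mult)
  qed
  have h': "\<forall>i<n. \<exists>w\<in>W'. \<exists>r. (\<forall>j<n. r j \<in> R) \<and> g i = w + a * (\<Sum>j<n. r j * g j)"
  proof (intro allI impI)
    fix i assume "i < n"
    then have "i < Suc n" by simp
    from Suc.prems(2)[rule_format, OF this] obtain w r where
      wr: "w \<in> W" "\<forall>j<Suc n. r j \<in> R" "g i = w + a * (\<Sum>j<Suc n. r j * g j)"
      by blast
    have eq: "g i = (w + (a * r n) * g n) + a * (\<Sum>j<n. r j * g j)"
      using wr(3) by (simp add: algebra_simps)
    have mem: "w + (a * r n) * g n \<in> W'" using wr a R by (intro W'I sr_mult) auto
    have rr: "\<forall>j<n. r j \<in> R" using wr(2) by simp
    show "\<exists>w\<in>W'. \<exists>r. (\<forall>j<n. r j \<in> R) \<and> g i = w + a * (\<Sum>j<n. r j * g j)"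
      using mem rr eq by blast
  qed
  obtain c1 where c1: "c1 \<in> R" "\<forall>i<n. (1 - a*c1) * g i \<in> W'" using Suc.IH[OF mW' h'] by blast
  define y where "y = 1 - a * c1"
  have yR: "y \<in> R" unfolding y_def using R a c1 by (auto intro!: sr_diff sr_1 sr_mult)
  have "n < Suc n" by simp
  from Suc.prems(2)[rule_format, OF this] obtain w0 r where
    wr: "w0 \<in> W" "\<forall>j<Suc n. r j \<in> R" "g n = w0 + a * (\<Sum>j<Suc n. r j * g j)"
    by blast
  have "(\<Sum>j<n. r j * (y * g j)) \<in> W'"
  proof (rule rmod_sum[OF mW'])
    fix j assume "j \<in> {..<n}"
    then have "r j \<in> R" "y * g j \<in> W'" using c1 wr(2) unfolding y_def by auto
    then show "r j * (y * g j) \<in> W'" using mW' unfolding rmod_def by blast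
  qed
  then obtain w3 t3 where wt3: "w3 \<in> W" "t3 \<in> R" "(\<Sum>j<n. r j * (y * g j)) = w3 + t3 * g n"
    unfolding W'_def by blast
  have "y * g n = y * (w0 + a * (\<Sum>j<Suc n. r j * g j))" by (rule arg_cong[OF wr(3)])
  also have "\<dots> = y * w0 + a * (\<Sum>j<n. r j * (y * g j)) + a * r n * y * g n"
    by (simp add: algebra_simps sum_distrib_left)
  also have "\<dots> = (y * w0 + a * w3) + a * (t3 + r n * y) * g n"
    using wt3(3) by (simp add: algebra_simps)
  finally have ygn: "y * g n = (y * w0 + a * w3) + a * (t3 + r n * y) * g n" .
  define c2 where "c2 = t3 + r n * y"
  have c2R: "c2 \<in> R" unfolding c2_def using wt3 wr(2) yR R by (auto intro!: sr_add sr_mult)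
  have gn: "(y - a * c2) * g n \<in> W"
  proof -
    have "(y - a * c2) * g n = y * w0 + a * w3" using ygn unfolding c2_def by (simp add: algebra_simps)
    then show ?thesis using Suc.prems(1) wr(1) wt3(1) yR a by (auto simp: rmod_def)
  qed
  define c where "c = c1 + c1 * y + c2 * y"
  have cR: "c \<in> R" unfolding c_def using c1 c2R yR R by (auto intro!: sr_add sr_mult)
  have zc: "1 - a * c = y * (y - a * c2)" unfolding c_def y_def by (simp add: algebra_simps)
  have yac2: "y - a * c2 \<in> R" using yR a c2R R by (auto intro!: sr_diff sr_mult)
  have "\<forall>i<Suc n. (1 - a*c) * g i \<in> W"
  proof (intro allI impI)
    fix i assume "i < Suc n"
    then consider "i = n" | "i < n" by linarith
    then show "(1 - a*c) * g i \<in> W"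
    proof cases
      case 1
      have "(1 - a*c) * g i = y * ((y - a * c2) * g n)" using 1 zc by (simp add: ac_simps)
      then show ?thesis using gn yR Suc.prems(1) by (auto simp: rmod_def)
    next
      case 2
      then have "y * g i \<in> W'" using c1 unfolding y_def by auto
      then obtain w t where wt: "w \<in> W" "t \<in> R" "y * g i = w + t * g n" unfolding W'_def by blast
      have "(1 - a*c) * g i = (y - a * c2) * (y * g i)" unfolding zc by (simp only: ac_simps)
      also have "\<dots> = (y - a * c2) * (w + t * g n)" unfolding wt(3) ..
      also have "\<dots> = (y - a * c2) * w + t * ((y - a * c2) * g n)" by (simp only: algebra_simps)
      finally have "(1 - a*c) * g i = (y - a * c2) * w + t * ((y - a * c2) * g n)" .
      moreover have "(y - a * c2) * w \<in> W" "t * ((y - a * c2) * g n) \<in> W"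
        using Suc.prems(1) wt yac2 gn by (auto simp: rmod_def)
      ultimately show ?thesis using Suc.prems(1) by (auto simp: rmod_def)
    qed
  qed
  then show ?case using cR by blast
qed

lemma good:
  assumes R: "is_subring R" and fip: "has_FIP R" and a: "a \<in> R"
    and cR: "\<forall>i<d. cf i \<in> R" and eq: "s^d + (\<Sum>i<d. cf i * s^i) = 0"
  shows "\<exists>N. \<exists>c\<in>R. \<forall>x\<in>spn R s d. (1 - a*c) * a^N * x \<in> R"
proof -
  define P where "P = spn R s d"
  have P: "is_subring P" unfolding P_def using spn_subring[OF R cR eq] .
  have RP: "R \<subseteq> P" unfolding P_def using spn_R[OF R cR eq] by blast
  have "range (tk R P a) \<subseteq> {T. is_subring T \<and> R \<subseteq> T}" using tk_sub[OF R P RP a] by auto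
  then have "finite (range (tk R P a))" using fip unfolding has_FIP_def by (rule finite_subset)
  then obtain i j where ij: "i < j" "tk R P a i = tk R P a j" using pigeon by blast
  define g where "g m = a^i * s^m" for m
  have stab: "\<exists>r\<in>R. \<exists>q\<in>P. a^i * p = r + a * (a^i * q)" if p: "p \<in> P" for p
  proof -
    have "a^i * p \<in> tk R P a i" using tk_intro[OF sr_0[OF R] p, of a i] by simp
    then have "a^i * p \<in> tk R P a j" using ij(2) by simp
    then obtain r q where rq: "r \<in> R" "q \<in> P" "a^i * p = r + a^j * q" unfolding tk_def by blast
    have jj: "j = Suc (i + (j-i-1))" using ij(1) by simp
    have "a^j * q = a * (a^i * (a^(j-i-1) * q))"
      by (subst jj) (simp only: power_Suc power_add mult.assoc)
    moreover have "a^(j-i-1) * q \<in> P" using rq RP sr_pow[OF R a] P by (auto intro!: sr_mult)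
    ultimately show ?thesis using rq by metis
  qed
  have h: "\<forall>m<d. \<exists>w\<in>R. \<exists>r. (\<forall>l<d. r l \<in> R) \<and> g m = w + a * (\<Sum>l<d. r l * g l)"
  proof (intro allI impI)
    fix m assume "m < d"
    then have "s^m \<in> P" unfolding P_def using spn_pow_lt[OF R] by blast
    then obtain w q where wq: "w \<in> R" "q \<in> P" "a^i * s^m = w + a * (a^i * q)" using stab by blast
    obtain r where r: "\<forall>l<d. r l \<in> R" "q = (\<Sum>l<d. r l * s^l)" using wq(2) unfolding P_def spn_def by blast
    have "a^i * q = (\<Sum>l<d. r l * g l)" unfolding r(2) g_def by (simp add: sum_distrib_left ac_simps)
    then show "\<exists>w\<in>R. \<exists>r. (\<forall>l<d. r l \<in> R) \<and> g m = w + a * (\<Sum>l<d. r l * g l)"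
      using wq r(1) unfolding g_def by auto
  qed
  have mR: "rmod R R" unfolding rmod_def using R by (auto intro: sr_0 sr_add sr_mult)
  obtain c where c: "c \<in> R" "\<forall>m<d. (1 - a*c) * g m \<in> R" using nak[OF R a mR h] by blast
  have "\<forall>x\<in>spn R s d. (1 - a*c) * a^i * x \<in> R"
  proof
    fix x assume "x \<in> spn R s d"
    then obtain r where r: "\<forall>l<d. r l \<in> R" "x = (\<Sum>l<d. r l * s^l)" unfolding spn_def by blast
    have "(1 - a*c) * a^i * x = (\<Sum>l<d. r l * ((1 - a*c) * g l))"
      unfolding r(2) g_def by (simp add: sum_distrib_left ac_simps)
    also have "\<dots> \<in> R" using r(1) c(2) by (intro sr_sum[OF R]) (simp add: sr_mult[OF R])
    finally show "(1 - a*c) * a^i * x \<in> R" .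
  qed
  then show ?thesis using c(1) by blast
qed

lemma combine:
  assumes R: "is_subring R" and a: "a \<in> R" and F: "finite F"
    and h: "\<forall>T\<in>F. \<exists>N. \<exists>c\<in>R. \<forall>x\<in>T. (1 - a*c) * a^N * x \<in> R"
  shows "\<exists>N. \<exists>c\<in>R. \<forall>T\<in>F. \<forall>x\<in>T. (1 - a*c) * a^N * x \<in> R"
  using F h
proof (induction F rule: finite_induct)
  case empty
  then show ?case using sr_0[OF R] by auto
next
  case (insert T F)
  obtain N1 c1 where 1: "c1 \<in> R" "\<forall>x\<in>T. (1 - a*c1) * a^N1 * x \<in> R" using insert.prems by auto
  obtain N2 c2 where 2: "c2 \<in> R" "\<forall>T\<in>F. \<forall>x\<in>T. (1 - a*c2) * a^N2 * x \<in> R"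
    using insert.IH insert.prems by auto
  define c where "c = c1 + c2 - a * c1 * c2"
  have cR: "c \<in> R" unfolding c_def using 1 2 a R by (auto intro!: sr_add sr_diff sr_mult)
  have f1: "(1 - a*c1) * a^N1 \<in> R" "(1 - a*c2) * a^N2 \<in> R" using 1 2 a R by (auto intro!: sr_diff sr_1 sr_mult sr_pow)
  have e: "(1 - a*c) * a^(N1+N2) * x = ((1 - a*c1) * a^N1) * ((1 - a*c2) * a^N2 * x)"
    "(1 - a*c) * a^(N1+N2) * x = ((1 - a*c2) * a^N2) * ((1 - a*c1) * a^N1 * x)" for x
    unfolding c_def by (simp_all add: algebra_simps power_add)
  have "\<forall>T'\<in>insert T F. \<forall>x\<in>T'. (1 - a*c) * a^(N1+N2) * x \<in> R"
  proof (intro ballI)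
    fix T' x assume T': "T' \<in> insert T F" and x: "x \<in> T'"
    show "(1 - a*c) * a^(N1+N2) * x \<in> R"
    proof (cases "T' = T")
      case True
      then have "(1 - a*c1) * a^N1 * x \<in> R" using 1 x by blast
      then show ?thesis unfolding e(2) using f1(2) sr_mult[OF R] by blast
    next
      case False
      then have "(1 - a*c2) * a^N2 * x \<in> R" using 2 x T' by blast
      then show ?thesis unfolding e(1) using f1(1) sr_mult[OF R] by blast
    qed
  qed
  then show ?case using cR by blast
qed

lemma integral_pos:
  assumes R: "is_subring R" and I: "integral_ext R"
  shows "\<exists>d cf. d \<ge> 1 \<and> (\<forall>i<d. cf i \<in> R) \<and> s^d + (\<Sum>i<d. cf i * s^i) = 0"
proof -
  obtain n c where nc: "\<forall>i<n. c i \<in> R" "s^n + (\<Sum>i<n. c i * s^i) = 0" using spec[OF I[unfolded integral_ext_def], of s] by blast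
  show ?thesis
  proof (cases "n = 0")
    case True
    then have "(1::'a) = 0" using nc by simp
    then have "s = 0" by (metis mult_1 mult_zero_left)
    then have "s^1 + (\<Sum>i<1. (\<lambda>_. 0) i * s^i) = 0" by simp
    then show ?thesis using sr_0[OF R] by (intro exI[of _ 1] exI[of _ "\<lambda>_. 0"]) auto
  next
    case False then have "n \<ge> 1" by simp
    then show ?thesis using nc by blast
  qed
qed

lemma bwd:
  assumes R: "is_subring R" and I: "integral_ext R" and fip: "has_FIP R"
    and sp: "semiprime_ideal (conductor R)"
  shows "seminormal_ext R"
  unfolding seminormal_ext_def
proof (intro allI impI)
  fix b :: 'a assume b: "b^2 \<in> R \<and> b^3 \<in> R"
  define a where "a = b^2"
  have a: "a \<in> R" using b a_def by simp
  have "\<forall>s. \<exists>d cf. d \<ge> 1 \<and> (\<forall>i<d. cf i \<in> R) \<and> s^d + (\<Sum>i<d. cf i * s^i) = 0"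
    using integral_pos[OF R I] by blast
  then obtain D CF where DC: "\<And>s. D s \<ge> 1 \<and> (\<forall>i<D s. CF s i \<in> R) \<and> s^(D s) + (\<Sum>i<D s. CF s i * s^i) = 0"
    by metis
  define P where "P s = spn R s (D s)" for s
  have sP: "s \<in> P s" for s
  proof -
    have "s^1 \<in> spn R s (D s)" using DC[of s] spn_pow[OF R, of "D s" "CF s" s 1] by blast
    then show ?thesis unfolding P_def by simp
  qed
  have "range P \<subseteq> {T. is_subring T \<and> R \<subseteq> T}"
    unfolding P_def using spn_subring[OF R] spn_R[OF R] DC by blast
  then have fin: "finite (range P)" using fip unfolding has_FIP_def by (rule finite_subset)
  have "\<forall>T\<in>range P. \<exists>N. \<exists>c\<in>R. \<forall>x\<in>T. (1 - a*c) * a^N * x \<in> R"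
    unfolding P_def using good[OF R fip a] DC by blast
  from combine[OF R a fin this] obtain N c where
    Nc: "c \<in> R" "\<forall>T\<in>range P. \<forall>x\<in>T. (1 - a*c) * a^N * x \<in> R" by blast
  have all: "(1 - a*c) * a^N * t \<in> R" for t using Nc(2) sP by blast
  have idl: "is_ideal (conductor R)" using sp by (simp add: semiprime_ideal_def)
  define d0 where "d0 = (1 - a*c) * a^Suc N"
  have d0R: "d0 \<in> R" unfolding d0_def using a Nc R by (auto intro!: sr_diff sr_1 sr_mult sr_pow)
  have "d0 * t \<in> R" for t
  proof -
    have "d0 * t = a * ((1 - a*c) * a^N * t)" unfolding d0_def by (simp add: ac_simps)
    then show ?thesis using all[of t] a R by (auto intro: sr_mult)
  qed
  then have d0C: "d0 \<in> conductor R" using d0R by (simp add: conductor_def)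
  define e where "e = a * (1 - a*c)"
  have "e ^ Suc N = (1 - a*c)^N * d0" unfolding e_def d0_def by (simp add: power_mult_distrib ac_simps)
  then have "e ^ Suc N \<in> conductor R" using ideal_mult[OF idl d0C] by simp
  then have eC: "e \<in> conductor R" using sp unfolding semiprime_ideal_def by (metis le_add1 plus_1_eq_Suc)
  define y where "y = b - b^3 * c"
  have "y^2 = (1 - a*c) * e" unfolding y_def e_def a_def
    by (simp add: power2_eq_square power3_eq_cube algebra_simps)
  then have "y^2 \<in> conductor R" using ideal_mult[OF idl eC] by simp
  then have "y \<in> conductor R" using sp unfolding semiprime_ideal_def by (metis one_le_numeral)
  then have "y \<in> R" using cond_sub by blast
  moreover have "b = y + b^3 * c" unfolding y_def by simp
  ultimately show "b \<in> R" using b Nc(1) R by (metis sr_add sr_mult)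
qed

theorem proposition3p2:
  fixes R :: "'a::comm_ring_1 set"
  assumes "is_subring R"
    and "integral_ext R"
    and "has_FIP R"
  shows "seminormal_ext R \<longleftrightarrow> semiprime_ideal (conductor R)"
  using fwd[OF assms(1)] bwd[OF assms] by blast

end
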